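(* Let $D$ and $H$ be finite sets of doctors and hospitals with $|D|\ge 2$ and $|H|\ge 2$. An interview arrangement $(\iota,\kappa)$ is globally adequate (i.e., adequate at every preference profile $P$) if and only if either (1) $\kappa_d=1$ for every $d\in D$ and $\iota_h=1$ for every $h\in H$, or (2) $\kappa_d\ge\min\{|D|,|H|\}$ for every $d\in D$ and $\iota_h\ge\min\{|D|,|H|\}$ for every $h\in H$.
   Context: Each $h\in H$ has a strict preference $P_h$ over $D\cup\{h\}$ and each $d\in D$ a strict preference $P_d$ over $H\cup\{d\}$ (ranking below oneself means unacceptable); a profile $P$ collects these, and $\mathcal P$ is the set of all profiles. A matching is $\mu:H\cup D\to H\cup D$ with $\mu(h)\in D\cup\{h\}$, $\mu(d)\in H\cup\{d\}$, and $\mu(d)=h$ iff $\mu(h)=d$; it is stable if there is no pair $(d,h)$ with $h\mathrel{P_d}\mu(d)$ and $d\mathrel{P_h}\mu(h)$. An interview arrangement is $(\iota,\kappa)$ with $\iota_h\in\mathbb N$ the interview capacity of each $h\in H$ and $\kappa_d\in\mathbb N$ that of each $d\in D$. An interview matching is a many-to-many matching $\nu$ ($\nu(d)\subseteq H$, $\nu(h)\subseteq D$, $h\in\nu(d)$ iff $d\in\nu(h)$) with $|\nu(d)|\le\kappa_d$, $|\nu(h)|\le\iota_h$. The $(\iota,\kappa)$-matching at $P$ is obtained in two steps. Step 1: $\nu$ is the hospital-optimal pairwise stable interview matching, computed by hospital-proposing deferred acceptance in which each agent's choice from a set of proposals is its acceptable partners in that set if at most its capacity many, otherwise its capacity-many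 best according to its preference. Step 2: the final matching is the outcome of doctor-proposing deferred acceptance with each agent's preference restricted to $\nu$ (agent $i$ ranks only agents in $\nu(i)$, in the order of $P_i$ and only if acceptable; all others unacceptable). $(\iota,\kappa)$ is adequate at $P$ if the $(\iota,\kappa)$-matching at $P$ is stable with respect to $P$, and globally adequate if adequate at every $P\in\mathcal P$. *)

theory Defs
  imports Main
begin

text \<open>A strict preference of an agent over the other side plus itself is represented by the
list of its acceptable partners, best first (agents ranked below oneself are exactly those
not in the list; their mutual order is irrelevant).\<close>

definition valid_pref :: "'b set \<Rightarrow> 'b list \<Rightarrow> bool" where
  "valid_pref B l \<longleftrightarrow> distinct l \<and> set l \<subseteq> B"

definition prefers :: "'b list \<Rightarrow> 'b \<Rightarrow> 'b \<Rightarrow> bool" where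
  "prefers l x y \<longleftrightarrow> x \<in> set l \<and> (y \<notin> set l \<or> (\<exists>i j. i < j \<and> j < length l \<and> l ! i = x \<and> l ! j = y))"

text \<open>R is the set of pairs (a,b) where b has already rejected a.\<close>

definition da_proposals ::
  "'a set \<Rightarrow> ('a \<Rightarrow> 'b list) \<Rightarrow> ('a \<Rightarrow> nat) \<Rightarrow> ('a \<times> 'b) set \<Rightarrow> ('a \<times> 'b) set" where
  "da_proposals A pa qa R =
     {(a, b). a \<in> A \<and> b \<in> set (take (qa a) (filter (\<lambda>b'. (a, b') \<notin> R) (pa a)))}"

definition da_held ::
  "('b \<Rightarrow> 'a list) \<Rightarrow> ('b \<Rightarrow> nat) \<Rightarrow> ('a \<times> 'b) set \<Rightarrow> ('a \<times> 'b) set" where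
  "da_held pb qb Pr =
     {(a, b). (a, b) \<in> Pr \<and> a \<in> set (take (qb b) (filter (\<lambda>a'. (a', b) \<in> Pr) (pb b)))}"

definition da_step ::
  "'a set \<Rightarrow> ('a \<Rightarrow> 'b list) \<Rightarrow> ('b \<Rightarrow> 'a list) \<Rightarrow> ('a \<Rightarrow> nat) \<Rightarrow> ('b \<Rightarrow> nat)
    \<Rightarrow> ('a \<times> 'b) set \<Rightarrow> ('a \<times> 'b) set" where
  "da_step A pa pb qa qb R =
     (let Pr = da_proposals A pa qa R in R \<union> (Pr - da_held pb qb Pr))"

text \<open>Every round that does not terminate adds a new rejected pair from the finite set
of (proposer, listed receiver) pairs, so after that many rounds a fixed point is reached.\<close>
definition da_rounds :: "'a set \<Rightarrow> ('a \<Rightarrow> 'b list) \<Rightarrow> nat" where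
  "da_rounds A pa = (\<Sum>a\<in>A. length (pa a))"

definition da ::
  "'a set \<Rightarrow> ('a \<Rightarrow> 'b list) \<Rightarrow> ('b \<Rightarrow> 'a list) \<Rightarrow> ('a \<Rightarrow> nat) \<Rightarrow> ('b \<Rightarrow> nat)
    \<Rightarrow> ('a \<times> 'b) set" where
  "da A pa pb qa qb =
     (let R = (da_step A pa pb qa qb ^^ da_rounds A pa) {}
      in da_held pb qb (da_proposals A pa qa R))"

definition interview_matching ::
  "'h set \<Rightarrow> ('h \<Rightarrow> nat) \<Rightarrow> ('d \<Rightarrow> nat) \<Rightarrow> ('h \<Rightarrow> 'd list) \<Rightarrow> ('d \<Rightarrow> 'h list)
    \<Rightarrow> ('h \<times> 'd) set" where
  "interview_matching H iota kappa Ph Pd = da H Ph Pd iota kappa"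

definition final_matching ::
  "'d set \<Rightarrow> 'h set \<Rightarrow> ('h \<Rightarrow> nat) \<Rightarrow> ('d \<Rightarrow> nat) \<Rightarrow> ('h \<Rightarrow> 'd list) \<Rightarrow> ('d \<Rightarrow> 'h list)
    \<Rightarrow> ('d \<times> 'h) set" where
  "final_matching D H iota kappa Ph Pd =
     (let \<nu> = interview_matching H iota kappa Ph Pd
      in da D (\<lambda>d. filter (\<lambda>h. (h, d) \<in> \<nu>) (Pd d))
              (\<lambda>h. filter (\<lambda>d. (h, d) \<in> \<nu>) (Ph h))
              (\<lambda>_. 1) (\<lambda>_. 1))"

text \<open>h P_d mu(d): h acceptable to d and better than every current partner of d
(if d is unmatched, mu(d) = d and this just says h is acceptable).\<close>
definition stable ::
  "'d set \<Rightarrow> 'h set \<Rightarrow> ('h \<Rightarrow> 'd list) \<Rightarrow> ('d \<Rightarrow> 'h list) \<Rightarrow> ('d \<times> 'h) set \<Rightarrow> bool" where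
  "stable D H Ph Pd M \<longleftrightarrow>
     \<not> (\<exists>d\<in>D. \<exists>h\<in>H.
          h \<in> set (Pd d) \<and> (\<forall>h'. (d, h') \<in> M \<longrightarrow> prefers (Pd d) h h') \<and>
          d \<in> set (Ph h) \<and> (\<forall>d'. (d', h) \<in> M \<longrightarrow> prefers (Ph h) d d'))"

definition valid_profile ::
  "'d set \<Rightarrow> 'h set \<Rightarrow> ('h \<Rightarrow> 'd list) \<Rightarrow> ('d \<Rightarrow> 'h list) \<Rightarrow> bool" where
  "valid_profile D H Ph Pd \<longleftrightarrow> (\<forall>h\<in>H. valid_pref D (Ph h)) \<and> (\<forall>d\<in>D. valid_pref H (Pd d))"

definition adequate ::
  "'d set \<Rightarrow> 'h set \<Rightarrow> ('h \<Rightarrow> nat) \<Rightarrow> ('d \<Rightarrow> nat) \<Rightarrow> ('h \<Rightarrow> 'd list) \<Rightarrow> ('d \<Rightarrow> 'h list) \<Rightarrow> bool" where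
  "adequate D H iota kappa Ph Pd \<longleftrightarrow> stable D H Ph Pd (final_matching D H iota kappa Ph Pd)"

definition globally_adequate ::
  "'d set \<Rightarrow> 'h set \<Rightarrow> ('h \<Rightarrow> nat) \<Rightarrow> ('d \<Rightarrow> nat) \<Rightarrow> bool" where
  "globally_adequate D H iota kappa \<longleftrightarrow>
     (\<forall>Ph Pd. valid_profile D H Ph Pd \<longrightarrow> adequate D H iota kappa Ph Pd)"

end

theory Submission
  imports Defs
begin

definition cnt :: "('b \<Rightarrow> bool) \<Rightarrow> 'b list \<Rightarrow> 'b \<Rightarrow> nat" where
  "cnt P l x = length (filter P (takeWhile (\<lambda>y. y \<noteq> x) l))"

lemma cnt_Cons: "cnt P (y # l) x = (if y = x then 0 else (if P y then Suc (cnt P l x) else cnt P l x))"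
  by (cases "y = x"; cases "P y") (simp_all add: cnt_def)
lemma cnt_Nil: "cnt P [] x = 0" by (simp add: cnt_def)

lemma take_filter_iff:
  "x \<in> set (take q (filter P l)) \<longleftrightarrow> x \<in> set l \<and> P x \<and> cnt P l x < q"
proof (induction l arbitrary: q)
  case Nil
  then show ?case by (simp add: cnt_def)
next
  case (Cons y l)
  show ?case
  proof (cases q)
    case 0
    then show ?thesis by simp
  next
    case (Suc q')
    show ?thesis
    proof (cases "y = x")
      case True then show ?thesis using Suc by (auto simp: cnt_Cons dest: in_set_takeD)
    next
      case False then show ?thesis using Suc Cons[of q'] Cons[of q] by (simp add: cnt_Cons)
    qed
  qed
qed

lemma cnt_mono: "(\<And>y. P y \<Longrightarrow> Q y) \<Longrightarrow> cnt P l x \<le> cnt Q l x"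
  by (induction l) (auto simp: cnt_Cons cnt_Nil)

lemma cnt_take:
  "q \<le> cnt P l x \<Longrightarrow> q \<le> cnt (\<lambda>y. y \<in> set (take q (filter P l))) l x"
proof (induction l arbitrary: q)
  case Nil
  then show ?case by (simp add: cnt_Nil)
next
  case (Cons y l)
  show ?case
  proof (cases "y = x")
    case True
    then show ?thesis using Cons.prems by (simp add: cnt_Cons)
  next
    case False
    show ?thesis
    proof (cases "P y")
      case True
      show ?thesis
      proof (cases q)
        case 0 then show ?thesis by simp
      next
        case (Suc q')
        have "q' \<le> cnt P l x" using Cons.prems False True Suc by (simp add: cnt_Cons)
        then have "q' \<le> cnt (\<lambda>z. z \<in> set (take q' (filter P l))) l x" using Cons.IH by blast
        also have "\<dots> \<le> cnt (\<lambda>z. z \<in> set (take q (filter P (y # l)))) l x"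
          by (rule cnt_mono) (simp add: True Suc)
        finally show ?thesis using False True Suc by (simp add: cnt_Cons)
      qed
    next
      case Pf: False
      have "q \<le> cnt P l x" using Cons.prems False Pf by (simp add: cnt_Cons)
      then have "q \<le> cnt (\<lambda>z. z \<in> set (take q (filter P l))) l x" using Cons.IH by blast
      then show ?thesis using False Pf by (simp add: cnt_Cons)
    qed
  qed
qed

lemma cnt_ge1: "1 \<le> cnt P l x \<Longrightarrow> \<exists>y\<in>set (takeWhile (\<lambda>y. y \<noteq> x) l). P y"
  unfolding cnt_def by (metis filter_empty_conv le_zero_eq length_0_conv one_neq_zero)

lemma cnt_zero: "(\<And>y. y \<in> set l \<Longrightarrow> y \<noteq> x \<Longrightarrow> \<not> P y) \<Longrightarrow> cnt P l x = 0"
  by (induction l) (auto simp: cnt_Cons cnt_Nil)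

lemma cnt_le_idx: "i < length l \<Longrightarrow> cnt P l (l ! i) \<le> i"
proof (induction l arbitrary: i)
  case Nil then show ?case by simp
next
  case (Cons y l)
  show ?case
  proof (cases i)
    case 0 then show ?thesis by (simp add: cnt_Cons)
  next
    case (Suc j)
    then have "cnt P l (l ! j) \<le> j" using Cons by simp
    then show ?thesis using Suc by (auto simp: cnt_Cons)
  qed
qed

lemma cnt_card: "distinct l \<Longrightarrow> cnt P l x = card {y \<in> set (takeWhile (\<lambda>y. y \<noteq> x) l). P y}"
proof -
  assume d: "distinct l"
  have "distinct (takeWhile (\<lambda>y. y \<noteq> x) l)" using d by (rule distinct_takeWhile)
  then show ?thesis unfolding cnt_def by (simp add: distinct_length_filter Collect_conj_eq Int_commute)
qed

lemma tw_filter: "Q x \<Longrightarrow> y \<in> set (takeWhile (\<lambda>z. z \<noteq> x) (filter Q l)) \<Longrightarrow> y \<in> set (takeWhile (\<lambda>z. z \<noteq> x) l)"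
proof (induction l)
  case Nil then show ?case by simp
next
  case (Cons a l)
  then show ?case by (cases "a = x"; cases "Q a") auto
qed

lemma tw_trans: "x \<in> set (takeWhile (\<lambda>z. z \<noteq> w) l) \<Longrightarrow> y \<in> set (takeWhile (\<lambda>z. z \<noteq> x) l)
   \<Longrightarrow> y \<in> set (takeWhile (\<lambda>z. z \<noteq> w) l)"
proof (induction l)
  case Nil then show ?case by simp
next
  case (Cons a l)
  have aw: "a \<noteq> w" using Cons.prems(1) by (cases "a = w") auto
  have ax: "a \<noteq> x" using Cons.prems(2) by (cases "a = x") auto
  have x: "x \<in> set (takeWhile (\<lambda>z. z \<noteq> w) l)" using Cons.prems(1) aw ax by simp
  have "y = a \<or> y \<in> set (takeWhile (\<lambda>z. z \<noteq> x) l)" using Cons.prems(2) ax by simp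
  then show ?case using Cons.IH[OF x] aw by auto
qed

lemma tw_idx: "y \<in> set (takeWhile (\<lambda>z. z \<noteq> x) l) \<Longrightarrow> \<exists>j<length l. l ! j = y \<and> (\<forall>t\<le>j. l ! t \<noteq> x)"
proof (induction l)
  case Nil then show ?case by simp
next
  case (Cons a l)
  have ax: "a \<noteq> x" using Cons.prems by (cases "a = x") auto
  show ?case
  proof (cases "y = a")
    case True then show ?thesis using ax by (intro exI[of _ 0]) auto
  next
    case False
    then have "y \<in> set (takeWhile (\<lambda>z. z \<noteq> x) l)" using Cons.prems ax by auto
    then obtain j where j: "j < length l" "l ! j = y" "\<forall>t\<le>j. l ! t \<noteq> x" using Cons.IH by blast
    have "\<forall>t\<le>Suc j. (a # l) ! t \<noteq> x"
    proof (intro allI impI)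
      fix t assume "t \<le> Suc j"
      then show "(a # l) ! t \<noteq> x" using j ax by (cases t) auto
    qed
    then show ?thesis using j by (intro exI[of _ "Suc j"]) auto
  qed
qed

lemma prefers_tw: "distinct l \<Longrightarrow> y \<in> set (takeWhile (\<lambda>z. z \<noteq> x) l) \<Longrightarrow> prefers l x y \<Longrightarrow> False"
proof -
  assume d: "distinct l" and y: "y \<in> set (takeWhile (\<lambda>z. z \<noteq> x) l)" and p: "prefers l x y"
  obtain j where j: "j < length l" "l ! j = y" "\<forall>t\<le>j. l ! t \<noteq> x" using tw_idx[OF y] by blast
  have ys: "y \<in> set l" using y by (meson set_takeWhileD)
  then obtain i j' where ij: "i < j'" "j' < length l" "l ! i = x" "l ! j' = y" using p unfolding prefers_def by blast
  have "j = j'" using nth_eq_iff_index_eq[OF d j(1) ij(2)] j(2) ij(4) by simp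
  then show False using ij j by auto
qed

lemma prefers_irrefl: "distinct l \<Longrightarrow> prefers l x x \<Longrightarrow> False"
proof -
  assume d: "distinct l" and "prefers l x x"
  then obtain i j where ij: "i < j" "j < length l" "l ! i = x" "l ! j = x" unfolding prefers_def by blast
  then show False using nth_eq_iff_index_eq[OF d, of i j] by simp
qed



context
  fixes A :: "'a set" and pa :: "'a \<Rightarrow> 'b list" and pb :: "'b \<Rightarrow> 'a list"
    and qa :: "'a \<Rightarrow> nat" and qb :: "'b \<Rightarrow> nat"
begin

lemma Pr_U: "da_proposals A pa qa R \<subseteq> {(a,b). a \<in> A \<and> b \<in> set (pa a)}"
  unfolding da_proposals_def by (auto dest: in_set_takeD)

lemma Pr_notR: "(a,b) \<in> da_proposals A pa qa R \<Longrightarrow> (a,b) \<notin> R"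
  unfolding da_proposals_def by (auto dest: in_set_takeD)

lemma held_sub: "da_held pb qb Pr \<subseteq> Pr"
  unfolding da_held_def by auto

lemma step_incr: "R \<subseteq> da_step A pa pb qa qb R"
  unfolding da_step_def Let_def by auto

lemma step_U: "R \<subseteq> {(a,b). a \<in> A \<and> b \<in> set (pa a)} \<Longrightarrow>
    da_step A pa pb qa qb R \<subseteq> {(a,b). a \<in> A \<and> b \<in> set (pa a)}"
  unfolding da_step_def Let_def using Pr_U by blast

lemma iter_U: "(da_step A pa pb qa qb ^^ n) {} \<subseteq> {(a,b). a \<in> A \<and> b \<in> set (pa a)}"
proof (induction n)
  case 0 then show ?case by simp
next
  case (Suc n) then show ?case using step_U by simp
qed

lemma finite_U: "finite A \<Longrightarrow> finite {(a,b). a \<in> A \<and> b \<in> set (pa a)}"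
proof -
  assume "finite A"
  have "{(a,b). a \<in> A \<and> b \<in> set (pa a)} = (\<Union>a\<in>A. {a} \<times> set (pa a))" by auto
  then show ?thesis using \<open>finite A\<close> by simp
qed

lemma card_U: "finite A \<Longrightarrow> card {(a,b). a \<in> A \<and> b \<in> set (pa a)} \<le> da_rounds A pa"
proof -
  assume fA: "finite A"
  have "{(a,b). a \<in> A \<and> b \<in> set (pa a)} = (\<Union>a\<in>A. {a} \<times> set (pa a))" by auto
  then have "card {(a,b). a \<in> A \<and> b \<in> set (pa a)} \<le> (\<Sum>a\<in>A. card ({a} \<times> set (pa a)))"
    using card_UN_le[OF fA, of "\<lambda>a. {a} \<times> set (pa a)"] by argo
  also have "\<dots> \<le> (\<Sum>a\<in>A. length (pa a))"
    by (rule sum_mono) (simp add: card_cartesian_product card_length)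
  finally show ?thesis unfolding da_rounds_def .
qed

lemma iter_progress:
  assumes fA: "finite A"
  shows "da_step A pa pb qa qb ((da_step A pa pb qa qb ^^ n) {}) = (da_step A pa pb qa qb ^^ n) {}
         \<or> n \<le> card ((da_step A pa pb qa qb ^^ n) {})"
proof (induction n)
  case 0 then show ?case by simp
next
  case (Suc n)
  let ?f = "da_step A pa pb qa qb"
  let ?R = "(?f ^^ n) {}"
  have fin: "finite (?f ?R)"
    using finite_subset[OF iter_U[of "Suc n"] finite_U[OF fA]] by simp
  show ?case
  proof (cases "?f ?R = ?R")
    case True then show ?thesis by simp
  next
    case False
    then have "?R \<subset> ?f ?R" using step_incr by blast
    then have "card ?R < card (?f ?R)" using fin by (simp add: psubset_card_mono)
    then have "Suc n \<le> card (?f ?R)" using Suc False by simp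
    then show ?thesis by simp
  qed
qed

lemma fixpoint:
  assumes fA: "finite A"
  shows "da_step A pa pb qa qb ((da_step A pa pb qa qb ^^ da_rounds A pa) {}) =
         (da_step A pa pb qa qb ^^ da_rounds A pa) {}"
proof -
  let ?f = "da_step A pa pb qa qb"
  let ?U = "{(a,b). a \<in> A \<and> b \<in> set (pa a)}"
  let ?R = "(?f ^^ da_rounds A pa) {}"
  show ?thesis
  proof (cases "?f ?R = ?R")
    case True then show ?thesis .
  next
    case False
    then have "da_rounds A pa \<le> card ?R" using iter_progress[OF fA] by blast
    then have "card ?U \<le> card ?R" using card_U[OF fA] by linarith
    then have "?R = ?U" using card_seteq[OF finite_U[OF fA] iter_U] by blast
    then have "?f ?R \<subseteq> ?R" using step_U by simp
    then show ?thesis using step_incr by blast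
  qed
qed

lemma held_next: "da_held pb qb (da_proposals A pa qa R) \<subseteq> da_proposals A pa qa (da_step A pa pb qa qb R)"
proof
  fix p assume p: "p \<in> da_held pb qb (da_proposals A pa qa R)"
  obtain a b where ab: "p = (a,b)" by (cases p)
  let ?Pr = "da_proposals A pa qa R"
  let ?R' = "da_step A pa pb qa qb R"
  have inPr: "(a,b) \<in> ?Pr" using p ab held_sub by blast
  have nR': "(a,b) \<notin> ?R'" using p ab Pr_notR[OF inPr] unfolding da_step_def Let_def by auto
  have aA: "a \<in> A" and b1: "b \<in> set (take (qa a) (filter (\<lambda>b'. (a, b') \<notin> R) (pa a)))"
    using inPr by (simp_all add: da_proposals_def)
  have c: "b \<in> set (pa a)" "cnt (\<lambda>b'. (a, b') \<notin> R) (pa a) b < qa a"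
    using b1 by (simp_all add: take_filter_iff)
  have "cnt (\<lambda>b'. (a, b') \<notin> ?R') (pa a) b \<le> cnt (\<lambda>b'. (a, b') \<notin> R) (pa a) b"
    by (rule cnt_mono) (use step_incr in blast)
  then have "b \<in> set (take (qa a) (filter (\<lambda>b'. (a, b') \<notin> ?R') (pa a)))"
    using c nR' by (simp add: take_filter_iff)
  then show "p \<in> da_proposals A pa qa ?R'" using aA ab unfolding da_proposals_def by auto
qed

definition inv_da :: "('a \<times> 'b) set \<Rightarrow> bool" where
  "inv_da R \<longleftrightarrow> (\<forall>a b. (a,b) \<in> R \<longrightarrow> a \<in> set (pb b) \<longrightarrow>
      qb b \<le> cnt (\<lambda>a'. (a',b) \<in> da_proposals A pa qa R) (pb b) a)"

lemma key_next:
  assumes "qb b \<le> cnt (\<lambda>a'. (a',b) \<in> da_proposals A pa qa R) (pb b) a"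
  shows "qb b \<le> cnt (\<lambda>a'. (a',b) \<in> da_proposals A pa qa (da_step A pa pb qa qb R)) (pb b) a"
proof -
  let ?Pr = "da_proposals A pa qa R"
  have "qb b \<le> cnt (\<lambda>y. y \<in> set (take (qb b) (filter (\<lambda>a'. (a',b) \<in> ?Pr) (pb b)))) (pb b) a"
    by (rule cnt_take[OF assms])
  also have "\<dots> \<le> cnt (\<lambda>a'. (a',b) \<in> da_proposals A pa qa (da_step A pa pb qa qb R)) (pb b) a"
  proof (rule cnt_mono)
    fix y assume y: "y \<in> set (take (qb b) (filter (\<lambda>a'. (a',b) \<in> ?Pr) (pb b)))"
    then have yb: "(y,b) \<in> ?Pr" by (simp add: take_filter_iff)
    then have "(y,b) \<in> da_held pb qb ?Pr" using y unfolding da_held_def by simp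
    then show "(y,b) \<in> da_proposals A pa qa (da_step A pa pb qa qb R)" using held_next by blast
  qed
  finally show ?thesis .
qed

lemma inv_step: "inv_da R \<Longrightarrow> inv_da (da_step A pa pb qa qb R)"
  unfolding inv_da_def
proof (intro allI impI)
  fix a b
  assume I: "\<forall>a b. (a, b) \<in> R \<longrightarrow> a \<in> set (pb b) \<longrightarrow> qb b \<le> cnt (\<lambda>a'. (a', b) \<in> da_proposals A pa qa R) (pb b) a"
    and ab: "(a, b) \<in> da_step A pa pb qa qb R" and a: "a \<in> set (pb b)"
  let ?Pr = "da_proposals A pa qa R"
  have "qb b \<le> cnt (\<lambda>a'. (a', b) \<in> ?Pr) (pb b) a"
  proof (cases "(a,b) \<in> R")
    case True then show ?thesis using I a by blast
  next
    case False
    then have "(a,b) \<in> ?Pr" "(a,b) \<notin> da_held pb qb ?Pr" using ab unfolding da_step_def Let_def by auto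
    then have "a \<notin> set (take (qb b) (filter (\<lambda>a'. (a',b) \<in> ?Pr) (pb b)))" unfolding da_held_def by simp
    then show ?thesis using a \<open>(a,b) \<in> ?Pr\<close> by (simp add: take_filter_iff not_less)
  qed
  then show "qb b \<le> cnt (\<lambda>a'. (a', b) \<in> da_proposals A pa qa (da_step A pa pb qa qb R)) (pb b) a"
    by (rule key_next)
qed

lemma inv_iter: "inv_da ((da_step A pa pb qa qb ^^ n) {})"
proof (induction n)
  case 0 then show ?case unfolding inv_da_def by simp
next
  case (Suc n) then show ?case using inv_step by simp
qed

lemma da_eq_Pr:
  assumes fA: "finite A"
  shows "da A pa pb qa qb = da_proposals A pa qa ((da_step A pa pb qa qb ^^ da_rounds A pa) {})"
proof -
  let ?R = "(da_step A pa pb qa qb ^^ da_rounds A pa) {}"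
  let ?Pr = "da_proposals A pa qa ?R"
  have "?Pr - da_held pb qb ?Pr \<subseteq> ?R" using fixpoint[OF fA] unfolding da_step_def Let_def by blast
  then have "?Pr \<subseteq> da_held pb qb ?Pr" using Pr_notR by fast
  then show ?thesis using held_sub unfolding da_def Let_def by blast
qed

lemma card_sub_take: "S \<subseteq> set (take q l) \<Longrightarrow> finite S \<and> card S \<le> q"
proof -
  assume S: "S \<subseteq> set (take q l)"
  have "card S \<le> card (set (take q l))" using S by (simp add: card_mono)
  also have "\<dots> \<le> length (take q l)" by (rule card_length)
  also have "\<dots> \<le> q" by simp
  finally show ?thesis using S finite_subset by blast
qed

theorem da_G1:
  assumes "finite A" "(a,b) \<in> da A pa pb qa qb"
  shows "a \<in> A \<and> b \<in> set (pa a) \<and> a \<in> set (pb b)"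
proof -
  have "(a,b) \<in> da_held pb qb (da_proposals A pa qa ((da_step A pa pb qa qb ^^ da_rounds A pa) {}))"
    using assms(2) unfolding da_def Let_def by simp
  then show ?thesis unfolding da_held_def da_proposals_def by (auto dest: in_set_takeD)
qed

theorem da_G2a:
  assumes "finite A"
  shows "finite {b. (a,b) \<in> da A pa pb qa qb} \<and> card {b. (a,b) \<in> da A pa pb qa qb} \<le> qa a"
proof -
  let ?R = "(da_step A pa pb qa qb ^^ da_rounds A pa) {}"
  have "{b. (a,b) \<in> da A pa pb qa qb} \<subseteq> set (take (qa a) (filter (\<lambda>b'. (a, b') \<notin> ?R) (pa a)))"
    unfolding da_eq_Pr[OF assms] da_proposals_def by auto
  then show ?thesis using card_sub_take by blast
qed

theorem da_G2b:
  assumes "finite A"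
  shows "finite {a. (a,b) \<in> da A pa pb qa qb} \<and> card {a. (a,b) \<in> da A pa pb qa qb} \<le> qb b"
proof -
  let ?R = "(da_step A pa pb qa qb ^^ da_rounds A pa) {}"
  let ?Pr = "da_proposals A pa qa ?R"
  have "{a. (a,b) \<in> da A pa pb qa qb} \<subseteq> set (take (qb b) (filter (\<lambda>a'. (a', b) \<in> ?Pr) (pb b)))"
    unfolding da_def Let_def da_held_def by auto
  then show ?thesis using card_sub_take by blast
qed

theorem da_G3:
  assumes fA: "finite A" and a: "a \<in> A" and b: "b \<in> set (pa a)" and ab: "a \<in> set (pb b)"
    and nM: "(a,b) \<notin> da A pa pb qa qb"
  shows "qa a \<le> cnt (\<lambda>b'. (a,b') \<in> da A pa pb qa qb) (pa a) b \<or>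
         qb b \<le> cnt (\<lambda>a'. (a',b) \<in> da A pa pb qa qb) (pb b) a"
proof -
  let ?R = "(da_step A pa pb qa qb ^^ da_rounds A pa) {}"
  let ?Pr = "da_proposals A pa qa ?R"
  have M: "da A pa pb qa qb = ?Pr" by (rule da_eq_Pr[OF fA])
  show ?thesis
  proof (cases "(a,b) \<in> ?R")
    case True
    have "qb b \<le> cnt (\<lambda>a'. (a',b) \<in> ?Pr) (pb b) a"
      using inv_iter[of "da_rounds A pa"] True ab unfolding inv_da_def by blast
    then show ?thesis using M by simp
  next
    case False
    have "(a,b) \<notin> ?Pr" using nM M by simp
    then have "b \<notin> set (take (qa a) (filter (\<lambda>b'. (a, b') \<notin> ?R) (pa a)))"
      using a by (simp add: da_proposals_def)
    then have "qa a \<le> cnt (\<lambda>b'. (a, b') \<notin> ?R) (pa a) b"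
      using False b by (simp add: take_filter_iff not_less)
    then have "qa a \<le> cnt (\<lambda>y. y \<in> set (take (qa a) (filter (\<lambda>b'. (a, b') \<notin> ?R) (pa a)))) (pa a) b"
      by (rule cnt_take)
    also have "\<dots> \<le> cnt (\<lambda>b'. (a,b') \<in> da A pa pb qa qb) (pa a) b"
      by (rule cnt_mono) (simp add: M da_proposals_def a)
    finally show ?thesis by blast
  qed
qed

end


lemma final_eq: "final_matching D H iota kappa Ph Pd =
  da D (\<lambda>d. filter (\<lambda>h. (h, d) \<in> da H Ph Pd iota kappa) (Pd d))
       (\<lambda>h. filter (\<lambda>d. (h, d) \<in> da H Ph Pd iota kappa) (Ph h)) (\<lambda>_. 1) (\<lambda>_. 1)"
  by (simp add: final_matching_def interview_matching_def Let_def)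

lemma card_le1_eq: "finite S \<and> card S \<le> q \<Longrightarrow> q = 1 \<Longrightarrow> x \<in> S \<Longrightarrow> y \<in> S \<Longrightarrow> x = y"
proof -
  assume a: "finite S \<and> card S \<le> q" "q = 1" "x \<in> S" "y \<in> S"
  then have "card S \<le> Suc 0" by simp
  then show "x = y" using a card_le_Suc0_iff_eq by blast
qed

context
  fixes D :: "'d set" and H :: "'h set" and iota :: "'h \<Rightarrow> nat" and kappa :: "'d \<Rightarrow> nat"
    and Ph :: "'h \<Rightarrow> 'd list" and Pd :: "'d \<Rightarrow> 'h list" and d :: 'd and h :: 'h
  assumes fD: "finite D" and fH: "finite H" and vp: "valid_profile D H Ph Pd"
    and dD: "d \<in> D" and hH: "h \<in> H"
    and hd: "h \<in> set (Pd d)" and bd: "\<forall>h'. (d, h') \<in> final_matching D H iota kappa Ph Pd \<longrightarrow> prefers (Pd d) h h'"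
    and dh: "d \<in> set (Ph h)" and bh: "\<forall>d'. (d', h) \<in> final_matching D H iota kappa Ph Pd \<longrightarrow> prefers (Ph h) d d'"
begin

abbreviation "nu \<equiv> da H Ph Pd iota kappa"
abbreviation "pa' \<equiv> (\<lambda>d. filter (\<lambda>h. (h, d) \<in> nu) (Pd d))"
abbreviation "pb' \<equiv> (\<lambda>h. filter (\<lambda>d. (h, d) \<in> nu) (Ph h))"
abbreviation "mu \<equiv> da D pa' pb' (\<lambda>_. 1) (\<lambda>_. 1)"

lemma bd': "(d, h') \<in> mu \<Longrightarrow> prefers (Pd d) h h'" using bd final_eq by metis
lemma bh': "(d', h) \<in> mu \<Longrightarrow> prefers (Ph h) d d'" using bh final_eq by metis

lemma distPd: "y \<in> D \<Longrightarrow> distinct (Pd y)" using vp unfolding valid_profile_def valid_pref_def by blast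
lemma distPh: "x \<in> H \<Longrightarrow> distinct (Ph x)" using vp unfolding valid_profile_def valid_pref_def by blast
lemma setPd: "y \<in> D \<Longrightarrow> set (Pd y) \<subseteq> H" using vp unfolding valid_profile_def valid_pref_def by blast
lemma setPh: "x \<in> H \<Longrightarrow> set (Ph x) \<subseteq> D" using vp unfolding valid_profile_def valid_pref_def by blast

lemma nu_G1: "(x, y) \<in> nu \<Longrightarrow> x \<in> H \<and> y \<in> set (Ph x) \<and> x \<in> set (Pd y) \<and> y \<in> D"
  using da_G1[OF fH, of x y Ph Pd iota kappa] setPh by blast

lemma mu_G1: "(y, x) \<in> mu \<Longrightarrow> y \<in> D \<and> (x, y) \<in> nu \<and> x \<in> set (Pd y) \<and> y \<in> set (Ph x)"
  using da_G1[OF fD, of y x pa' pb' "\<lambda>_. 1" "\<lambda>_. 1"] by auto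

lemma not_nu: "(h, d) \<notin> nu"
proof
  assume n: "(h, d) \<in> nu"
  have a: "h \<in> set (pa' d)" using n hd by simp
  have b: "d \<in> set (pb' h)" using n dh by simp
  show False
  proof (cases "(d, h) \<in> mu")
    case True
    show False by (rule prefers_irrefl[OF distPd[OF dD] bd'[OF True]])
  next
    case False
    from da_G3[OF fD dD a b False]
    show False
    proof
      assume "(1::nat) \<le> cnt (\<lambda>b'. (d, b') \<in> mu) (pa' d) h"
      then obtain h'' where h'': "h'' \<in> set (takeWhile (\<lambda>y. y \<noteq> h) (pa' d))" "(d, h'') \<in> mu"
        by (blast dest: cnt_ge1)
      have "h'' \<in> set (takeWhile (\<lambda>y. y \<noteq> h) (Pd d))" using tw_filter[of "\<lambda>h. (h, d) \<in> nu", OF n h''(1)] .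
      then show False using prefers_tw[OF distPd[OF dD] _ bd'[OF h''(2)]] by blast
    next
      assume "(1::nat) \<le> cnt (\<lambda>a'. (a', h) \<in> mu) (pb' h) d"
      then obtain d'' where d'': "d'' \<in> set (takeWhile (\<lambda>y. y \<noteq> d) (pb' h))" "(d'', h) \<in> mu"
        by (blast dest: cnt_ge1)
      have "d'' \<in> set (takeWhile (\<lambda>y. y \<noteq> d) (Ph h))" using tw_filter[of "\<lambda>d. (h, d) \<in> nu", OF n d''(1)] .
      then show False using prefers_tw[OF distPh[OF hH] _ bh'[OF d''(2)]] by blast
    qed
  qed
qed

lemma core_D:
  assumes n: "(h', d) \<in> nu" and tw: "h' \<in> set (takeWhile (\<lambda>y. y \<noteq> h) (Pd d))"
  shows "\<exists>d''. (d'', h') \<in> mu \<and> d'' \<noteq> d"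
proof -
  have a: "h' \<in> set (pa' d)" using n nu_G1 by simp
  have b: "d \<in> set (pb' h')" using n nu_G1 by simp
  show ?thesis
  proof (cases "(d, h') \<in> mu")
    case True
    then show ?thesis using prefers_tw[OF distPd[OF dD] tw bd'[OF True]] by blast
  next
    case False
    from da_G3[OF fD dD a b False]
    show ?thesis
    proof
      assume "(1::nat) \<le> cnt (\<lambda>b'. (d, b') \<in> mu) (pa' d) h'"
      then obtain h'' where h'': "h'' \<in> set (takeWhile (\<lambda>y. y \<noteq> h') (pa' d))" "(d, h'') \<in> mu"
        by (blast dest: cnt_ge1)
      have "h'' \<in> set (takeWhile (\<lambda>y. y \<noteq> h') (Pd d))" using tw_filter[of "\<lambda>h. (h, d) \<in> nu", OF n h''(1)] .
      then have "h'' \<in> set (takeWhile (\<lambda>y. y \<noteq> h) (Pd d))" using tw_trans[OF tw] by blast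
      then show ?thesis using prefers_tw[OF distPd[OF dD] _ bd'[OF h''(2)]] by blast
    next
      assume "(1::nat) \<le> cnt (\<lambda>a'. (a', h') \<in> mu) (pb' h') d"
      then obtain d'' where d'': "d'' \<in> set (takeWhile (\<lambda>y. y \<noteq> d) (pb' h'))" "(d'', h') \<in> mu"
        by (blast dest: cnt_ge1)
      have "d'' \<noteq> d" using set_takeWhileD[OF d''(1)] by simp
      then show ?thesis using d''(2) by blast
    qed
  qed
qed

lemma core_H:
  assumes n: "(h, d') \<in> nu" and tw: "d' \<in> set (takeWhile (\<lambda>y. y \<noteq> d) (Ph h))"
  shows "\<exists>h''. (d', h'') \<in> mu \<and> h'' \<noteq> h"
proof -
  have d'D: "d' \<in> D" using n nu_G1 by blast
  have a: "h \<in> set (pa' d')" using n nu_G1 by simp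
  have b: "d' \<in> set (pb' h)" using n nu_G1 by simp
  show ?thesis
  proof (cases "(d', h) \<in> mu")
    case True
    then show ?thesis using prefers_tw[OF distPh[OF hH] tw bh'[OF True]] by blast
  next
    case False
    from da_G3[OF fD d'D a b False]
    show ?thesis
    proof
      assume "(1::nat) \<le> cnt (\<lambda>b'. (d', b') \<in> mu) (pa' d') h"
      then obtain h'' where h'': "h'' \<in> set (takeWhile (\<lambda>y. y \<noteq> h) (pa' d'))" "(d', h'') \<in> mu"
        by (blast dest: cnt_ge1)
      have "h'' \<noteq> h" using set_takeWhileD[OF h''(1)] by simp
      then show ?thesis using h''(2) by blast
    next
      assume "(1::nat) \<le> cnt (\<lambda>a'. (a', h) \<in> mu) (pb' h) d'"
      then obtain d'' where d'': "d'' \<in> set (takeWhile (\<lambda>y. y \<noteq> d') (pb' h))" "(d'', h) \<in> mu"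
        by (blast dest: cnt_ge1)
      have "d'' \<in> set (takeWhile (\<lambda>y. y \<noteq> d') (Ph h))" using tw_filter[of "\<lambda>d. (h, d) \<in> nu", OF n d''(1)] .
      then have "d'' \<in> set (takeWhile (\<lambda>y. y \<noteq> d) (Ph h))" using tw_trans[OF tw] by blast
      then show ?thesis using prefers_tw[OF distPh[OF hH] _ bh'[OF d''(2)]] by blast
    qed
  qed
qed

lemma G3_nu: "iota h \<le> cnt (\<lambda>d'. (h, d') \<in> nu) (Ph h) d \<or> kappa d \<le> cnt (\<lambda>h'. (h', d) \<in> nu) (Pd d) h"
  using da_G3[OF fH hH dh hd not_nu] .

lemma all_one: "\<forall>x\<in>H. iota x = 1 \<Longrightarrow> \<forall>y\<in>D. kappa y = 1 \<Longrightarrow> False"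
proof -
  assume i1: "\<forall>x\<in>H. iota x = 1" and k1: "\<forall>y\<in>D. kappa y = 1"
  from G3_nu show False
  proof
    assume "iota h \<le> cnt (\<lambda>d'. (h, d') \<in> nu) (Ph h) d"
    then have "1 \<le> cnt (\<lambda>d'. (h, d') \<in> nu) (Ph h) d" using i1 hH by simp
    then obtain d' where d': "d' \<in> set (takeWhile (\<lambda>y. y \<noteq> d) (Ph h))" "(h, d') \<in> nu"
      by (blast dest: cnt_ge1)
    obtain h'' where h'': "(d', h'') \<in> mu" "h'' \<noteq> h" using core_H[OF d'(2) d'(1)] by blast
    have n2: "(h'', d') \<in> nu" using mu_G1[OF h''(1)] by blast
    have d'D: "d' \<in> D" using d'(2) nu_G1 by blast
    show False using card_le1_eq[OF da_G2b[OF fH, where pa=Ph and pb=Pd and qa=iota and qb=kappa and b=d'] _ , of h'' h] k1 d'D n2 d'(2) h''(2)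
      by simp
  next
    assume "kappa d \<le> cnt (\<lambda>h'. (h', d) \<in> nu) (Pd d) h"
    then have "1 \<le> cnt (\<lambda>h'. (h', d) \<in> nu) (Pd d) h" using k1 dD by simp
    then obtain h' where h': "h' \<in> set (takeWhile (\<lambda>y. y \<noteq> h) (Pd d))" "(h', d) \<in> nu"
      by (blast dest: cnt_ge1)
    obtain d'' where d'': "(d'', h') \<in> mu" "d'' \<noteq> d" using core_D[OF h'(2) h'(1)] by blast
    have n2: "(h', d'') \<in> nu" using mu_G1[OF d''(1)] by blast
    have h'H: "h' \<in> H" using h'(2) nu_G1 by blast
    show False using card_le1_eq[OF da_G2a[OF fH, where pa=Ph and pb=Pd and qa=iota and qb=kappa and a=h'] _ , of d'' d] i1 h'H n2 h'(2) d''(2)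
      by simp
  qed
qed

lemma bound_D: "kappa d \<le> cnt (\<lambda>h'. (h', d) \<in> nu) (Pd d) h \<Longrightarrow> kappa d \<le> card D - 1 \<and> kappa d \<le> card H - 1"
proof -
  assume k: "kappa d \<le> cnt (\<lambda>h'. (h', d) \<in> nu) (Pd d) h"
  define S where "S = {h' \<in> set (takeWhile (\<lambda>y. y \<noteq> h) (Pd d)). (h', d) \<in> nu}"
  have cS: "cnt (\<lambda>h'. (h', d) \<in> nu) (Pd d) h = card S"
    unfolding S_def using cnt_card[OF distPd[OF dD]] by blast
  have SH: "S \<subseteq> H - {h}" unfolding S_def using setPd[OF dD] by (auto dest: set_takeWhileD)
  have c1: "card S \<le> card H - 1"
    using card_mono[OF finite_Diff[OF fH] SH] hH by (simp add: card_Diff_singleton)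
  define f where "f = (\<lambda>h'. SOME d''. (d'', h') \<in> mu \<and> d'' \<noteq> d)"
  have fP: "(f h', h') \<in> mu \<and> f h' \<noteq> d" if "h' \<in> S" for h'
  proof -
    have "\<exists>d''. (d'', h') \<in> mu \<and> d'' \<noteq> d" using that core_D unfolding S_def by blast
    then show ?thesis unfolding f_def by (rule someI_ex)
  qed
  have inj: "inj_on f S"
  proof (rule inj_onI)
    fix x y assume x: "x \<in> S" and y: "y \<in> S" and e: "f x = f y"
    have "(f x, x) \<in> mu" "(f x, y) \<in> mu" using fP[OF x] fP[OF y] e by auto
    then show "x = y" using card_le1_eq[OF da_G2a[OF fD, where pa=pa' and pb=pb' and qa="\<lambda>_. 1" and qb="\<lambda>_. 1" and a="f x"]] by simp
  qed
  have img: "f ` S \<subseteq> D - {d}" using fP mu_G1 by blast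
  have "card S \<le> card (D - {d})" using card_inj_on_le[OF inj img finite_Diff[OF fD]] .
  then have c2: "card S \<le> card D - 1" using dD by (simp add: card_Diff_singleton)
  show ?thesis using k cS c1 c2 by simp
qed

lemma bound_H: "iota h \<le> cnt (\<lambda>d'. (h, d') \<in> nu) (Ph h) d \<Longrightarrow> iota h \<le> card D - 1 \<and> iota h \<le> card H - 1"
proof -
  assume k: "iota h \<le> cnt (\<lambda>d'. (h, d') \<in> nu) (Ph h) d"
  define S where "S = {d' \<in> set (takeWhile (\<lambda>y. y \<noteq> d) (Ph h)). (h, d') \<in> nu}"
  have cS: "cnt (\<lambda>d'. (h, d') \<in> nu) (Ph h) d = card S"
    unfolding S_def using cnt_card[OF distPh[OF hH]] by blast
  have SD: "S \<subseteq> D - {d}" unfolding S_def using setPh[OF hH] by (auto dest: set_takeWhileD)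
  have c1: "card S \<le> card D - 1"
    using card_mono[OF finite_Diff[OF fD] SD] dD by (simp add: card_Diff_singleton)
  define f where "f = (\<lambda>d'. SOME h''. (d', h'') \<in> mu \<and> h'' \<noteq> h)"
  have fP: "(d', f d') \<in> mu \<and> f d' \<noteq> h" if "d' \<in> S" for d'
  proof -
    have "\<exists>h''. (d', h'') \<in> mu \<and> h'' \<noteq> h" using that core_H unfolding S_def by blast
    then show ?thesis unfolding f_def by (rule someI_ex)
  qed
  have inj: "inj_on f S"
  proof (rule inj_onI)
    fix x y assume x: "x \<in> S" and y: "y \<in> S" and e: "f x = f y"
    have "(x, f x) \<in> mu" "(y, f x) \<in> mu" using fP[OF x] fP[OF y] e by auto
    then show "x = y" using card_le1_eq[OF da_G2b[OF fD, where pa=pa' and pb=pb' and qa="\<lambda>_. 1" and qb="\<lambda>_. 1" and b="f x"]] by simp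
  qed
  have img: "f ` S \<subseteq> H - {h}" using fP mu_G1 nu_G1 by blast
  have "card S \<le> card (H - {h})" using card_inj_on_le[OF inj img finite_Diff[OF fH]] .
  then have c2: "card S \<le> card H - 1" using hH by (simp add: card_Diff_singleton)
  show ?thesis using k cS c1 c2 by simp
qed

lemma all_big: "\<forall>x\<in>H. iota x \<ge> min (card D) (card H) \<Longrightarrow> \<forall>y\<in>D. kappa y \<ge> min (card D) (card H) \<Longrightarrow> False"
proof -
  assume i: "\<forall>x\<in>H. iota x \<ge> min (card D) (card H)" and k: "\<forall>y\<in>D. kappa y \<ge> min (card D) (card H)"
  have pD: "card D > 0" using dD fD card_gt_0_iff by blast
  have pH: "card H > 0" using hH fH card_gt_0_iff by blast
  from G3_nu show False
  proof
    assume "iota h \<le> cnt (\<lambda>d'. (h, d') \<in> nu) (Ph h) d"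
    then show False using bound_H i hH pD pH by fastforce
  next
    assume "kappa d \<le> cnt (\<lambda>h'. (h', d) \<in> nu) (Pd d) h"
    then show False using bound_D k dD pD pH by fastforce
  qed
qed

end

lemma sufficiency:
  assumes fD: "finite D" and fH: "finite H"
    and c: "((\<forall>d\<in>D. kappa d = 1) \<and> (\<forall>h\<in>H. iota h = 1)) \<or>
            ((\<forall>d\<in>D. kappa d \<ge> min (card D) (card H)) \<and> (\<forall>h\<in>H. iota h \<ge> min (card D) (card H)))"
  shows "globally_adequate D H iota kappa"
  unfolding globally_adequate_def adequate_def
proof (intro allI impI)
  fix Ph Pd assume vp: "valid_profile D H Ph Pd"
  show "stable D H Ph Pd (final_matching D H iota kappa Ph Pd)"
    unfolding stable_def
  proof
    assume "\<exists>d\<in>D. \<exists>h\<in>H. h \<in> set (Pd d) \<and> (\<forall>h'. (d, h') \<in> final_matching D H iota kappa Ph Pd \<longrightarrow> prefers (Pd d) h h') \<and>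
          d \<in> set (Ph h) \<and> (\<forall>d'. (d', h) \<in> final_matching D H iota kappa Ph Pd \<longrightarrow> prefers (Ph h) d d')"
    then obtain d h where dD: "d \<in> D" and hH: "h \<in> H" and b: "h \<in> set (Pd d)"
      "\<forall>h'. (d, h') \<in> final_matching D H iota kappa Ph Pd \<longrightarrow> prefers (Pd d) h h'"
      "d \<in> set (Ph h)" "\<forall>d'. (d', h) \<in> final_matching D H iota kappa Ph Pd \<longrightarrow> prefers (Ph h) d d'"
      by blast
    from c show False
    proof
      assume "(\<forall>d\<in>D. kappa d = 1) \<and> (\<forall>h\<in>H. iota h = 1)"
      then show False using all_one[OF fD fH vp dD hH b] by blast
    next
      assume "(\<forall>d\<in>D. kappa d \<ge> min (card D) (card H)) \<and> (\<forall>h\<in>H. iota h \<ge> min (card D) (card H))"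
      then show False using all_big[OF fD fH vp dD hH b] by blast
    qed
  qed
qed



lemma DocCE:
  fixes D :: "'d set" and H :: "'h set" and iota :: "'h \<Rightarrow> nat" and kappa :: "'d \<Rightarrow> nat"
  assumes fD: "finite D" and fH: "finite H" and dD: "d \<in> D" and hH: "h \<in> H"
    and hs1: "distinct hs" and hs2: "set hs \<subseteq> H" and hs3: "h \<notin> set hs" and hs4: "length hs = kappa d"
    and hs5: "\<forall>x\<in>set hs. 2 \<le> iota x"
    and ds1: "distinct ds" and ds2: "set ds \<subseteq> D" and ds3: "d \<notin> set ds" and ds4: "length ds = kappa d"
    and i1: "\<forall>x\<in>H. 1 \<le> iota x" and k1: "\<forall>y\<in>D. 1 \<le> kappa y"
  shows "\<not> globally_adequate D H iota kappa"
proof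
  assume ga: "globally_adequate D H iota kappa"
  define k where "k = kappa d"
  define Ph where "Ph x = (case map_of (zip hs ds) x of Some y \<Rightarrow> [y, d] | None \<Rightarrow> if x = h then [d] else [])" for x
  define Pd where "Pd y = (if y = d then hs @ [h] else case map_of (zip ds hs) y of Some x \<Rightarrow> [x] | None \<Rightarrow> [])" for y
  have len: "length hs = k" "length ds = k" using hs4 ds4 k_def by auto
  have dsi: "ds ! i \<noteq> d" "ds ! i \<in> D" "ds ! i \<in> set ds" if "i < k" for i
    using that len ds2 ds3 nth_mem by (metis in_mono)+
  have hsi: "hs ! i \<noteq> h" "hs ! i \<in> H" "hs ! i \<in> set hs" if "i < k" for i
    using that len hs2 hs3 nth_mem by (metis in_mono)+
  have PhI: "Ph (hs ! i) = [ds ! i, d]" if "i < k" for i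
    unfolding Ph_def using map_of_zip_nth[of hs ds i] that len hs1 by simp
  have Phh: "Ph h = [d]"
  proof -
    have "map_of (zip hs ds) h = None" using hs3 len by simp
    then show ?thesis unfolding Ph_def by simp
  qed
  have PhO: "Ph x = []" if "x \<notin> set hs" "x \<noteq> h" for x
  proof -
    have "map_of (zip hs ds) x = None" using that len by simp
    then show ?thesis unfolding Ph_def using that by simp
  qed
  have PdI: "Pd (ds ! i) = [hs ! i]" if "i < k" for i
    unfolding Pd_def using map_of_zip_nth[of ds hs i] that len ds1 dsi(1)[OF that] by simp
  have Pdd: "Pd d = hs @ [h]" unfolding Pd_def by simp
  have PdO: "Pd y = []" if "y \<notin> set ds" "y \<noteq> d" for y
  proof -
    have "map_of (zip ds hs) y = None" using that len by simp
    then show ?thesis unfolding Pd_def using that by simp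
  qed
  have vp: "valid_profile D H Ph Pd"
    unfolding valid_profile_def valid_pref_def
  proof (rule conjI; intro ballI)
    fix x assume xH: "x \<in> H"
    show "distinct (Ph x) \<and> set (Ph x) \<subseteq> D"
    proof (cases "x \<in> set hs")
      case True
      then obtain i where "i < k" "x = hs ! i" using len by (metis in_set_conv_nth)
      then show ?thesis using PhI dsi dD by auto
    next
      case False
      then show ?thesis using Phh PhO dD by (cases "x = h") auto
    qed
  next
    fix y assume yD: "y \<in> D"
    show "distinct (Pd y) \<and> set (Pd y) \<subseteq> H"
    proof (cases "y \<in> set ds")
      case True
      then obtain i where "i < k" "y = ds ! i" using len by (metis in_set_conv_nth)
      then show ?thesis using PdI hsi by auto
    next
      case False
      then show ?thesis using Pdd PdO hs1 hs2 hs3 hH by (cases "y = d") auto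
    qed
  qed
  let ?nu = "da H Ph Pd iota kappa"
  have nu1: "(hs ! i, ds ! i) \<in> ?nu" if i: "i < k" for i
  proof (rule ccontr)
    assume n: "(hs ! i, ds ! i) \<notin> ?nu"
    have a: "ds ! i \<in> set (Ph (hs ! i))" using PhI[OF i] by simp
    have b: "hs ! i \<in> set (Pd (ds ! i))" using PdI[OF i] by simp
    from da_G3[OF fH hsi(2)[OF i] a b n] show False
      using PhI[OF i] PdI[OF i] i1 k1 hsi(2)[OF i] dsi(2)[OF i] by (auto simp: cnt_Cons)
  qed
  have nu2: "(hs ! i, d) \<in> ?nu" if i: "i < k" for i
  proof (rule ccontr)
    assume n: "(hs ! i, d) \<notin> ?nu"
    have a: "d \<in> set (Ph (hs ! i))" using PhI[OF i] by simp
    have b: "hs ! i \<in> set (Pd d)" using Pdd hsi(3)[OF i] by simp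
    have c1: "cnt (\<lambda>b'. (hs ! i, b') \<in> ?nu) (Ph (hs ! i)) d \<le> 1"
      using PhI[OF i] dsi(1)[OF i] by (simp add: cnt_Cons)
    have "(hs @ [h]) ! i = hs ! i" using i len by (simp add: nth_append)
    then have c2: "cnt (\<lambda>a'. (a', d) \<in> ?nu) (Pd d) (hs ! i) \<le> i"
      using cnt_le_idx[of i "hs @ [h]"] i len Pdd by simp
    from da_G3[OF fH hsi(2)[OF i] a b n] show False
      using c1 c2 hs5 hsi(3)[OF i] i k_def by fastforce
  qed
  have nu3: "(h, d) \<notin> ?nu"
  proof
    assume hd: "(h, d) \<in> ?nu"
    have G: "finite {a. (a, d) \<in> ?nu} \<and> card {a. (a, d) \<in> ?nu} \<le> kappa d"
      by (rule da_G2b[OF fH])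
    have sub: "insert h (set hs) \<subseteq> {a. (a, d) \<in> ?nu}"
    proof
      fix x assume "x \<in> insert h (set hs)"
      then show "x \<in> {a. (a, d) \<in> ?nu}"
      proof
        assume "x = h" then show ?thesis using hd by simp
      next
        assume "x \<in> set hs"
        then obtain i where "i < k" "x = hs ! i" using len by (metis in_set_conv_nth)
        then show ?thesis using nu2 by simp
      qed
    qed
    have "card (insert h (set hs)) = Suc k" using hs1 hs3 len by (simp add: distinct_card)
    then show False using card_mono[OF conjunct1[OF G] sub] G k_def by simp
  qed
  let ?pa = "\<lambda>d. filter (\<lambda>h. (h, d) \<in> ?nu) (Pd d)"
  let ?pb = "\<lambda>h. filter (\<lambda>d. (h, d) \<in> ?nu) (Ph h)"
  let ?mu = "da D ?pa ?pb (\<lambda>_. 1) (\<lambda>_. 1)"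
  have mu_eq: "final_matching D H iota kappa Ph Pd = ?mu" by (rule final_eq)
  have mu1: "(ds ! i, hs ! i) \<in> ?mu" if i: "i < k" for i
  proof (rule ccontr)
    assume n: "(ds ! i, hs ! i) \<notin> ?mu"
    have pa: "?pa (ds ! i) = [hs ! i]" using PdI[OF i] nu1[OF i] by simp
    have pb: "?pb (hs ! i) = [ds ! i, d]" using PhI[OF i] nu1[OF i] nu2[OF i] by simp
    have a: "hs ! i \<in> set (?pa (ds ! i))" using pa by simp
    have b: "ds ! i \<in> set (?pb (hs ! i))" using pb by simp
    from da_G3[OF fD dsi(2)[OF i] a b n] show False
      using pa pb by (auto simp: cnt_Cons)
  qed
  have mud: "(d, x) \<notin> ?mu" for x
  proof
    assume dx: "(d, x) \<in> ?mu"
    have "x \<in> set (?pa d)" using da_G1[OF fD dx] by blast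
    then have x1: "x \<in> set (Pd d)" "(x, d) \<in> ?nu" by simp_all
    then have "x \<in> set hs" using nu3 Pdd by auto
    then obtain i where i: "i < k" "x = hs ! i" using len by (metis in_set_conv_nth)
    have G: "finite {a. (a, hs ! i) \<in> ?mu} \<and> card {a. (a, hs ! i) \<in> ?mu} \<le> 1"
      by (rule da_G2b[OF fD])
    have "d = ds ! i" using card_le1_eq[OF G refl, of d "ds ! i"] dx i mu1[OF i(1)] by simp
    then show False using dsi(1)[OF i(1)] by simp
  qed
  have muh: "(y, h) \<notin> ?mu" for y
  proof
    assume yh: "(y, h) \<in> ?mu"
    have "y \<in> set (?pb h)" using da_G1[OF fD yh] by blast
    then show False using Phh nu3 by auto
  qed
  have "stable D H Ph Pd (final_matching D H iota kappa Ph Pd)"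
    using ga vp unfolding globally_adequate_def adequate_def by blast
  then have "\<not> (h \<in> set (Pd d) \<and> (\<forall>h'. (d, h') \<in> ?mu \<longrightarrow> prefers (Pd d) h h') \<and>
      d \<in> set (Ph h) \<and> (\<forall>d'. (d', h) \<in> ?mu \<longrightarrow> prefers (Ph h) d d'))"
    unfolding stable_def mu_eq using dD hH by blast
  then show False using Pdd Phh mud muh by simp
qed

lemma HospCE:
  fixes D :: "'d set" and H :: "'h set" and iota :: "'h \<Rightarrow> nat" and kappa :: "'d \<Rightarrow> nat"
  assumes fD: "finite D" and fH: "finite H" and dD: "d \<in> D" and hH: "h \<in> H"
    and ds1: "distinct ds" and ds2: "set ds \<subseteq> D" and ds3: "d \<notin> set ds" and ds4: "length ds = iota h"
    and ds5: "\<forall>y\<in>set ds. 2 \<le> kappa y"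
    and hs1: "distinct hs" and hs2: "set hs \<subseteq> H" and hs3: "h \<notin> set hs" and hs4: "length hs = iota h"
    and i1: "\<forall>x\<in>H. 1 \<le> iota x" and k1: "\<forall>y\<in>D. 1 \<le> kappa y"
  shows "\<not> globally_adequate D H iota kappa"
proof
  assume ga: "globally_adequate D H iota kappa"
  define k where "k = iota h"
  define Ph where "Ph x = (if x = h then ds @ [d] else case map_of (zip hs ds) x of Some y \<Rightarrow> [y] | None \<Rightarrow> [])" for x
  define Pd where "Pd y = (case map_of (zip ds hs) y of Some x \<Rightarrow> [x, h] | None \<Rightarrow> if y = d then [h] else [])" for y
  have len: "length hs = k" "length ds = k" using hs4 ds4 k_def by auto
  have dsi: "ds ! i \<noteq> d" "ds ! i \<in> D" "ds ! i \<in> set ds" if "i < k" for i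
    using that len ds2 ds3 nth_mem by (metis in_mono)+
  have hsi: "hs ! i \<noteq> h" "hs ! i \<in> H" "hs ! i \<in> set hs" if "i < k" for i
    using that len hs2 hs3 nth_mem by (metis in_mono)+
  have PhI: "Ph (hs ! i) = [ds ! i]" if "i < k" for i
    unfolding Ph_def using map_of_zip_nth[of hs ds i] that len hs1 hsi(1)[OF that] by simp
  have Phh: "Ph h = ds @ [d]" unfolding Ph_def by simp
  have PhO: "Ph x = []" if "x \<notin> set hs" "x \<noteq> h" for x
  proof -
    have "map_of (zip hs ds) x = None" using that len by simp
    then show ?thesis unfolding Ph_def using that by simp
  qed
  have PdI: "Pd (ds ! i) = [hs ! i, h]" if "i < k" for i
    unfolding Pd_def using map_of_zip_nth[of ds hs i] that len ds1 by simp
  have Pdd: "Pd d = [h]"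
  proof -
    have "map_of (zip ds hs) d = None" using ds3 len by simp
    then show ?thesis unfolding Pd_def by simp
  qed
  have PdO: "Pd y = []" if "y \<notin> set ds" "y \<noteq> d" for y
  proof -
    have "map_of (zip ds hs) y = None" using that len by simp
    then show ?thesis unfolding Pd_def using that by simp
  qed
  have vp: "valid_profile D H Ph Pd"
    unfolding valid_profile_def valid_pref_def
  proof (rule conjI; intro ballI)
    fix x assume xH: "x \<in> H"
    show "distinct (Ph x) \<and> set (Ph x) \<subseteq> D"
    proof (cases "x \<in> set hs")
      case True
      then obtain i where "i < k" "x = hs ! i" using len by (metis in_set_conv_nth)
      then show ?thesis using PhI dsi by auto
    next
      case False
      then show ?thesis using Phh PhO dD ds1 ds2 ds3 by (cases "x = h") auto
    qed
  next
    fix y assume yD: "y \<in> D"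
    show "distinct (Pd y) \<and> set (Pd y) \<subseteq> H"
    proof (cases "y \<in> set ds")
      case True
      then obtain i where "i < k" "y = ds ! i" using len by (metis in_set_conv_nth)
      then show ?thesis using PdI hsi hH by auto
    next
      case False
      then show ?thesis using Pdd PdO hH by (cases "y = d") auto
    qed
  qed
  let ?nu = "da H Ph Pd iota kappa"
  have nu1: "(hs ! i, ds ! i) \<in> ?nu" if i: "i < k" for i
  proof (rule ccontr)
    assume n: "(hs ! i, ds ! i) \<notin> ?nu"
    have a: "ds ! i \<in> set (Ph (hs ! i))" using PhI[OF i] by simp
    have b: "hs ! i \<in> set (Pd (ds ! i))" using PdI[OF i] by simp
    from da_G3[OF fH hsi(2)[OF i] a b n] show False
      using PhI[OF i] PdI[OF i] i1 k1 hsi(2)[OF i] dsi(2)[OF i] by (auto simp: cnt_Cons)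
  qed
  have nu2: "(h, ds ! i) \<in> ?nu" if i: "i < k" for i
  proof (rule ccontr)
    assume n: "(h, ds ! i) \<notin> ?nu"
    have a: "ds ! i \<in> set (Ph h)" using Phh dsi(3)[OF i] by simp
    have b: "h \<in> set (Pd (ds ! i))" using PdI[OF i] by simp
    have c1: "cnt (\<lambda>a'. (a', ds ! i) \<in> ?nu) (Pd (ds ! i)) h \<le> 1"
      using PdI[OF i] hsi(1)[OF i] by (simp add: cnt_Cons)
    have "(ds @ [d]) ! i = ds ! i" using i len by (simp add: nth_append)
    then have c2: "cnt (\<lambda>b'. (h, b') \<in> ?nu) (Ph h) (ds ! i) \<le> i"
      using cnt_le_idx[of i "ds @ [d]"] i len Phh by simp
    from da_G3[OF fH hH a b n] show False
      using c1 c2 ds5 dsi(3)[OF i] i k_def by fastforce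
  qed
  have nu3: "(h, d) \<notin> ?nu"
  proof
    assume hd: "(h, d) \<in> ?nu"
    have G: "finite {b. (h, b) \<in> ?nu} \<and> card {b. (h, b) \<in> ?nu} \<le> iota h"
      by (rule da_G2a[OF fH])
    have sub: "insert d (set ds) \<subseteq> {b. (h, b) \<in> ?nu}"
    proof
      fix x assume "x \<in> insert d (set ds)"
      then show "x \<in> {b. (h, b) \<in> ?nu}"
      proof
        assume "x = d" then show ?thesis using hd by simp
      next
        assume "x \<in> set ds"
        then obtain i where "i < k" "x = ds ! i" using len by (metis in_set_conv_nth)
        then show ?thesis using nu2 by simp
      qed
    qed
    have "card (insert d (set ds)) = Suc k" using ds1 ds3 len by (simp add: distinct_card)
    then show False using card_mono[OF conjunct1[OF G] sub] G k_def by simp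
  qed
  let ?pa = "\<lambda>d. filter (\<lambda>h. (h, d) \<in> ?nu) (Pd d)"
  let ?pb = "\<lambda>h. filter (\<lambda>d. (h, d) \<in> ?nu) (Ph h)"
  let ?mu = "da D ?pa ?pb (\<lambda>_. 1) (\<lambda>_. 1)"
  have mu_eq: "final_matching D H iota kappa Ph Pd = ?mu" by (rule final_eq)
  have mu1: "(ds ! i, hs ! i) \<in> ?mu" if i: "i < k" for i
  proof (rule ccontr)
    assume n: "(ds ! i, hs ! i) \<notin> ?mu"
    have pa: "?pa (ds ! i) = [hs ! i, h]" using PdI[OF i] nu1[OF i] nu2[OF i] by simp
    have pb: "?pb (hs ! i) = [ds ! i]" using PhI[OF i] nu1[OF i] by simp
    have a: "hs ! i \<in> set (?pa (ds ! i))" using pa by simp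
    have b: "ds ! i \<in> set (?pb (hs ! i))" using pb by simp
    from da_G3[OF fD dsi(2)[OF i] a b n] show False
      using pa pb by (auto simp: cnt_Cons)
  qed
  have muh: "(y, h) \<notin> ?mu" for y
  proof
    assume yh: "(y, h) \<in> ?mu"
    have "y \<in> set (?pb h)" using da_G1[OF fD yh] by blast
    then have y1: "y \<in> set (Ph h)" "(h, y) \<in> ?nu" by simp_all
    then have "y \<in> set ds" using nu3 Phh by auto
    then obtain i where i: "i < k" "y = ds ! i" using len by (metis in_set_conv_nth)
    have G: "finite {b. (ds ! i, b) \<in> ?mu} \<and> card {b. (ds ! i, b) \<in> ?mu} \<le> 1"
      by (rule da_G2a[OF fD])
    have "h = hs ! i" using card_le1_eq[OF G refl, of h "hs ! i"] yh i mu1[OF i(1)] by simp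
    then show False using hsi(1)[OF i(1)] by simp
  qed
  have mud: "(d, x) \<notin> ?mu" for x
  proof
    assume dx: "(d, x) \<in> ?mu"
    have "x \<in> set (?pa d)" using da_G1[OF fD dx] by blast
    then have x1: "x \<in> set (Pd d)" "(x, d) \<in> ?nu" by simp_all
    then show False using nu3 Pdd by auto
  qed
  have "stable D H Ph Pd (final_matching D H iota kappa Ph Pd)"
    using ga vp unfolding globally_adequate_def adequate_def by blast
  then have "\<not> (h \<in> set (Pd d) \<and> (\<forall>h'. (d, h') \<in> ?mu \<longrightarrow> prefers (Pd d) h h') \<and>
      d \<in> set (Ph h) \<and> (\<forall>d'. (d', h) \<in> ?mu \<longrightarrow> prefers (Ph h) d d'))"
    unfolding stable_def mu_eq using dD hH by blast
  then show False using Pdd Phh mud muh by simp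
qed



lemma list_of_set: "finite S \<Longrightarrow> \<exists>xs. set xs = S \<and> distinct xs \<and> length xs = card S"
  using finite_distinct_list distinct_card by metis

lemma DocCE2:
  fixes D :: "'d set" and H :: "'h set" and iota :: "'h \<Rightarrow> nat" and kappa :: "'d \<Rightarrow> nat"
  assumes fD: "finite D" and fH: "finite H" and dD: "d \<in> D" and hH: "h \<in> H"
    and S: "S \<subseteq> H - {h}" "card S = kappa d" "\<forall>x\<in>S. 2 \<le> iota x" and kD: "kappa d < card D"
    and i1: "\<forall>x\<in>H. 1 \<le> iota x" and k1: "\<forall>y\<in>D. 1 \<le> kappa y"
  shows "\<not> globally_adequate D H iota kappa"
proof -
  have fS: "finite S" using S(1) fH finite_subset by blast
  obtain hs where hs: "set hs = S" "distinct hs" "length hs = card S" using list_of_set[OF fS] by blast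
  have "kappa d \<le> card (D - {d})" using kD dD fD by (simp add: card_Diff_singleton)
  then obtain T where T: "T \<subseteq> D - {d}" "card T = kappa d" "finite T" by (rule obtain_subset_with_card_n)
  obtain ds where ds: "set ds = T" "distinct ds" "length ds = card T" using list_of_set[OF T(3)] by blast
  show ?thesis
    by (rule DocCE[where iota=iota and kappa=kappa, OF fD fH dD hH hs(2) _ _ _ _ ds(2)]) (use hs ds S T i1 k1 in auto)
qed

lemma HospCE2:
  fixes D :: "'d set" and H :: "'h set" and iota :: "'h \<Rightarrow> nat" and kappa :: "'d \<Rightarrow> nat"
  assumes fD: "finite D" and fH: "finite H" and dD: "d \<in> D" and hH: "h \<in> H"
    and S: "S \<subseteq> D - {d}" "card S = iota h" "\<forall>y\<in>S. 2 \<le> kappa y" and iH: "iota h < card H"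
    and i1: "\<forall>x\<in>H. 1 \<le> iota x" and k1: "\<forall>y\<in>D. 1 \<le> kappa y"
  shows "\<not> globally_adequate D H iota kappa"
proof -
  have fS: "finite S" using S(1) fD finite_subset by blast
  obtain ds where ds: "set ds = S" "distinct ds" "length ds = card S" using list_of_set[OF fS] by blast
  have "iota h \<le> card (H - {h})" using iH hH fH by (simp add: card_Diff_singleton)
  then obtain T where T: "T \<subseteq> H - {h}" "card T = iota h" "finite T" by (rule obtain_subset_with_card_n)
  obtain hs where hs: "set hs = T" "distinct hs" "length hs = card T" using list_of_set[OF T(3)] by blast
  show ?thesis
    by (rule HospCE[where iota=iota and kappa=kappa, OF fD fH dD hH ds(2) _ _ _ _ hs(2)]) (use hs ds S T i1 k1 in auto)
qed

lemma necessity: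
  fixes D :: "'d set" and H :: "'h set" and iota :: "'h \<Rightarrow> nat" and kappa :: "'d \<Rightarrow> nat"
  assumes fD: "finite D" and fH: "finite H" and cD: "card D \<ge> 2" and cH: "card H \<ge> 2"
    and i1: "\<forall>h\<in>H. iota h \<ge> 1" and k1: "\<forall>d\<in>D. kappa d \<ge> 1"
    and nc: "\<not> (((\<forall>d\<in>D. kappa d = 1) \<and> (\<forall>h\<in>H. iota h = 1)) \<or>
            ((\<forall>d\<in>D. kappa d \<ge> min (card D) (card H)) \<and> (\<forall>h\<in>H. iota h \<ge> min (card D) (card H))))"
  shows "\<not> globally_adequate D H iota kappa"
proof -
  let ?m = "min (card D) (card H)"
  have m2: "?m \<ge> 2" using cD cH by simp
  have caseA: ?thesis if d: "d \<in> D" "kappa d < ?m" and i2: "\<forall>x\<in>H. iota x \<ge> 2" for d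
  proof -
    obtain h where hH: "h \<in> H" using cH by fastforce
    have "card (H - {h}) = card H - 1" using hH fH by (simp add: card_Diff_singleton)
    then have "kappa d \<le> card (H - {h})" using d by linarith
    then obtain S where S: "S \<subseteq> H - {h}" "card S = kappa d" "finite S" by (rule obtain_subset_with_card_n)
    show ?thesis by (rule DocCE2[where iota=iota and kappa=kappa, OF fD fH d(1) hH S(1) S(2)]) (use i2 S d i1 k1 in auto)
  qed
  have caseB: ?thesis if h: "h \<in> H" "iota h < ?m" and k2: "\<forall>y\<in>D. kappa y \<ge> 2" for h
  proof -
    obtain d where dD: "d \<in> D" using cD by fastforce
    have "card (D - {d}) = card D - 1" using dD fD by (simp add: card_Diff_singleton)
    then have "iota h \<le> card (D - {d})" using h by linarith
    then obtain S where S: "S \<subseteq> D - {d}" "card S = iota h" "finite S" by (rule obtain_subset_with_card_n)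
    show ?thesis by (rule HospCE2[where iota=iota and kappa=kappa, OF fD fH dD h(1) S(1) S(2)]) (use k2 S h i1 k1 in auto)
  qed
  show ?thesis
  proof (cases "\<forall>x\<in>H. iota x \<ge> 2")
    case i2: True
    show ?thesis
    proof (cases "\<exists>d\<in>D. kappa d < ?m")
      case True then show ?thesis using caseA i2 by blast
    next
      case False
      then have "\<forall>y\<in>D. kappa y \<ge> ?m" using not_less by blast
      moreover then obtain h where "h \<in> H" "iota h < ?m" using nc by (auto simp: not_le)
      ultimately show ?thesis using caseB m2 by fastforce
    qed
  next
    case False
    then obtain h0 where h0: "h0 \<in> H" "iota h0 = 1" using i1 by fastforce
    show ?thesis
    proof (cases "\<forall>y\<in>D. kappa y \<ge> 2")
      case True then show ?thesis using caseB[OF h0(1)] h0(2) m2 by simp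
    next
      case False
      then obtain d0 where d0: "d0 \<in> D" "kappa d0 = 1" using k1 by fastforce
      have "(\<exists>h1\<in>H. iota h1 \<ge> 2) \<or> (\<exists>d1\<in>D. kappa d1 \<ge> 2)" using nc i1 k1 by fastforce
      then show ?thesis
      proof
        assume "\<exists>h1\<in>H. iota h1 \<ge> 2"
        then obtain h1 where h1: "h1 \<in> H" "iota h1 \<ge> 2" by blast
        have "h1 \<noteq> h0" using h1 h0 by auto
        then show ?thesis
          by (intro DocCE2[where iota=iota and kappa=kappa, OF fD fH d0(1) h0(1), of "{h1}"]) (use h1 d0 cD i1 k1 in auto)
      next
        assume "\<exists>d1\<in>D. kappa d1 \<ge> 2"
        then obtain d1 where d1: "d1 \<in> D" "kappa d1 \<ge> 2" by blast
        have "d1 \<noteq> d0" using d1 d0 by auto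
        then show ?thesis
          by (intro HospCE2[where iota=iota and kappa=kappa, OF fD fH d0(1) h0(1), of "{d1}"]) (use d1 h0 cH i1 k1 in auto)
      qed
    qed
  qed
qed

theorem proposition1:
  fixes D :: "'d set" and H :: "'h set" and iota :: "'h \<Rightarrow> nat" and kappa :: "'d \<Rightarrow> nat"
  assumes "finite D" and "finite H" and "card D \<ge> 2" and "card H \<ge> 2"
    and "\<forall>h\<in>H. iota h \<ge> 1" and "\<forall>d\<in>D. kappa d \<ge> 1"
  shows "globally_adequate D H iota kappa \<longleftrightarrow>
           (((\<forall>d\<in>D. kappa d = 1) \<and> (\<forall>h\<in>H. iota h = 1)) \<or>
            ((\<forall>d\<in>D. kappa d \<ge> min (card D) (card H)) \<and> (\<forall>h\<in>H. iota h \<ge> min (card D) (card H))))"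
  using sufficiency[OF assms(1,2)] necessity[OF assms] by blast

end
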